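(* Let $d>0$, let $\ell$ be a certified lower bound with certificate matrix $\Lambda=[\lambda_1|\cdots|\lambda_m]$, and suppose $f(d,\ell)=1$. Suppose $j\in\{1,\dots,m\}$ satisfies $0<a_j^\top y(d,\ell)-u_j\le\gamma_j(d,\ell)$, and that in addition $-\lambda_j^\top u\ge L_j:=a_j^\top y(d,\ell)-\gamma_j(d,\ell)$. Define $\ell^{(1)}:=\ell-\frac{2(t_j(d,\ell)-v_j(\ell))}{d_j\gamma_j(d,\ell)^2}e_j$ and suppose $f(d,\ell^{(1)})>0$. Define $d^{(1)}:=d/f(d,\ell^{(1)})$, $$\ell^{(2)}:=\ell^{(1)}+\frac{2\big(2v_j(\ell^{(1)})-\gamma_j(d^{(1)},\ell^{(1)})\big)}{(m-1)d^{(1)}_j\gamma_j(d^{(1)},\ell^{(1)})^2+2}e_j,\qquad d^{(2)}:=d^{(1)}+\frac{2}{m-1}\frac{1}{\gamma_j(d^{(1)},\ell^{(1)})^2}e_j,$$ and $d^{(3)}:=d^{(2)}/f(d^{(2)},\ell^{(2)})$. Then: (a) $\ell^{(2)}_j\le\max\{\ell_j,L_j\}$, and hence $\ell^{(2)}$ is a certified lower bound with certificate matrix $\Lambda$; (b) $\gamma_j(d^{(1)},\ell^{(1)})>0$ (so $\ell^{(2)}$ and $d^{(2)}$ are well defined); (c) $f(d^{(2)},\ell^{(2)})=\frac{m^2}{m^2-1}$, i.e. $d^{(3)}=\frac{m^2-1}{m^2}\Big(d^{(1)}+\frac{2}{m-1}\frac{1}{\gamma_j(d^{(1)},\ell^{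(1)})^2}e_j\Big)$.
   Context: Standing assumption: $A=[a_1|\cdots|a_m]\in\mathbb{R}^{n\times m}$ has columns of unit Euclidean norm and $\{A\lambda:\lambda\ge0\}=\mathbb{R}^n$ (so $m>n\ge1$); $u\in\mathbb{R}^m$. $D=\mathrm{diag}(d)$; $r(\ell)=\tfrac12(u+\ell)$, $v(\ell)=\tfrac12(u-\ell)$, $B(d)=ADA^\top$, $y(d,\ell)=B(d)^{-1}ADr(\ell)$, $t(d,\ell)=A^\top y(d,\ell)-r(\ell)$, $f(d,\ell)=v(\ell)^\top Dv(\ell)-t(d,\ell)^\top Dt(d,\ell)$, $\gamma_i(d,\ell)=\sqrt{f(d,\ell)a_i^\top B(d)^{-1}a_i}$ when $f(d,\ell)>0$. $\ell$ is a certified lower bound with certificate matrix $\Lambda\in\mathbb{R}^{m\times m}$ if $A\Lambda=-A$, $\Lambda\ge0$, $-\Lambda^\top u\ge\ell$. *)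

theory Defs
  imports "HOL-Analysis.Analysis"
begin

text \<open>Setting: A has n rows (index type 'n) and m columns (index type 'm);
  a_i = column i A.  Vectors in R^m are real^'m, matrices real^'m^'n.\<close>

definition diagm :: "real^'m \<Rightarrow> real^'m^'m" where
  "diagm d = (\<chi> i k. if i = k then d $ i else 0)"

definition standing_assm :: "real^'m^'n \<Rightarrow> bool" where
  "standing_assm A \<longleftrightarrow> (\<forall>i. norm (column i A) = 1) \<and>
     {A *v lam | lam. \<forall>i. lam $ i \<ge> 0} = UNIV"

definition rr :: "real^'m \<Rightarrow> real^'m \<Rightarrow> real^'m" where
  "rr u l = (1/2) *\<^sub>R (u + l)"

definition vv :: "real^'m \<Rightarrow> real^'m \<Rightarrow> real^'m" where
  "vv u l = (1/2) *\<^sub>R (u - l)"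

definition BB :: "real^'m^'n \<Rightarrow> real^'m \<Rightarrow> real^'n^'n" where
  "BB A d = A ** diagm d ** transpose A"

definition yy :: "real^'m^'n \<Rightarrow> real^'m \<Rightarrow> real^'m \<Rightarrow> real^'m \<Rightarrow> real^'n" where
  "yy A u d l = matrix_inv (BB A d) *v (A *v (diagm d *v rr u l))"

definition tt :: "real^'m^'n \<Rightarrow> real^'m \<Rightarrow> real^'m \<Rightarrow> real^'m \<Rightarrow> real^'m" where
  "tt A u d l = transpose A *v yy A u d l - rr u l"

definition ff :: "real^'m^'n \<Rightarrow> real^'m \<Rightarrow> real^'m \<Rightarrow> real^'m \<Rightarrow> real" where
  "ff A u d l = vv u l \<bullet> (diagm d *v vv u l) - tt A u d l \<bullet> (diagm d *v tt A u d l)"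

text \<open>gamma_i(d,l) = sqrt (f(d,l) a_i^T B(d)^{-1} a_i); the paper only uses it when f(d,l) > 0.\<close>
definition gam :: "real^'m^'n \<Rightarrow> real^'m \<Rightarrow> real^'m \<Rightarrow> real^'m \<Rightarrow> 'm \<Rightarrow> real" where
  "gam A u d l i = sqrt (ff A u d l * (column i A \<bullet> (matrix_inv (BB A d) *v column i A)))"

definition certified_lb :: "real^'m^'n \<Rightarrow> real^'m \<Rightarrow> real^'m \<Rightarrow> real^'m^'m \<Rightarrow> bool" where
  "certified_lb A u l Lam \<longleftrightarrow> A ** Lam = - A \<and> (\<forall>i k. Lam $ i $ k \<ge> 0) \<and>
     (\<forall>i. - ((transpose Lam *v u) $ i) \<ge> l $ i)"

end

theory Submission
  imports Defs
begin

declare transpose_matrix_vector [simp del]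




lemma col_inner: "column i A \<bullet> y = (\<Sum>k\<in>UNIV. A$k$i * y$k)"
  by (simp add: inner_vec_def column_def mult.commute)

lemma diagm_apply: "diagm d *v w = (\<chi> i. d$i * w$i)"
proof -
  have "\<And>i. (\<Sum>k\<in>UNIV. (if i = k then d$i else 0) * w$k) = d$i * w$i"
  proof -
    fix i
    have "(\<Sum>k\<in>UNIV. (if i = k then d$i else 0) * w$k) = (\<Sum>k\<in>UNIV. if i = k then d$i * w$k else 0)"
      by (rule sum.cong) auto
    also have "\<dots> = d$i * w$i" by simp
    finally show "(\<Sum>k\<in>UNIV. (if i = k then d$i else 0) * w$k) = d$i * w$i" .
  qed
  then show ?thesis by (simp add: diagm_def matrix_vector_mult_def vec_eq_iff)
qed

lemma transpose_apply: "transpose A *v x = (\<chi> i. column i A \<bullet> x)"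
  by (simp add: vec_eq_iff col_inner transpose_def matrix_vector_mult_def mult.commute)

lemma BB_apply: "BB A d *v x = A *v (\<chi> i. d$i * (column i A \<bullet> x))"
  unfolding BB_def
  by (simp only: matrix_vector_mul_assoc[symmetric] transpose_apply diagm_apply) simp

lemma dot_A: "y \<bullet> (A *v w) = (\<Sum>i\<in>UNIV. (column i A \<bullet> y) * w$i)"
proof -
  have "y \<bullet> (A *v w) = (\<Sum>k\<in>UNIV. \<Sum>i\<in>UNIV. y$k * (A$k$i * w$i))"
    by (simp add: inner_vec_def matrix_vector_mult_def sum_distrib_left)
  also have "\<dots> = (\<Sum>i\<in>UNIV. \<Sum>k\<in>UNIV. y$k * (A$k$i * w$i))"
    by (rule sum.swap)
  also have "\<dots> = (\<Sum>i\<in>UNIV. (column i A \<bullet> y) * w$i)"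
    by (simp add: col_inner sum_distrib_left sum_distrib_right mult_ac)
  finally show ?thesis .
qed

lemma quad_BB: "x \<bullet> (BB A d *v x) = (\<Sum>i\<in>UNIV. d$i * (column i A \<bullet> x)^2)"
  by (simp add: BB_apply dot_A power2_eq_square mult_ac)

lemma matrix_inv_ok:
  assumes "invertible M"
  shows "M ** matrix_inv M = mat 1" "matrix_inv M ** M = mat 1"
  using someI_ex[OF assms[unfolded invertible_def]] unfolding matrix_inv_def by auto

lemma inv_apply:
  fixes M :: "real^'n^'n"
  assumes "invertible M" "M *v x = b" shows "matrix_inv M *v b = x"
  using assms matrix_inv_ok(2)[OF assms(1)]
  by (metis matrix_vector_mul_assoc matrix_vector_mul_lid)

lemma inv_apply2:
  fixes M :: "real^'n^'n"
  assumes "invertible M" shows "M *v (matrix_inv M *v b) = b"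
  using matrix_inv_ok(1)[OF assms(1)]
  by (metis matrix_vector_mul_assoc matrix_vector_mul_lid)

lemma BB_invertible:
  fixes A :: "real^'m^'n"
  assumes std: "standing_assm A" and dpos: "\<forall>i. d $ i > 0"
  shows "invertible (BB A d)"
proof -
  have "\<forall>x. BB A d *v x = 0 \<longrightarrow> x = 0"
  proof (intro allI impI)
    fix x assume "BB A d *v x = 0"
    then have "(\<Sum>i\<in>UNIV. d$i * (column i A \<bullet> x)^2) = 0"
      using quad_BB[of x A d] by simp
    then have "\<forall>i\<in>UNIV. d$i * (column i A \<bullet> x)^2 = 0"
      by (subst sum_nonneg_eq_0_iff[symmetric]) (auto intro!: mult_nonneg_nonneg simp: less_imp_le[OF dpos[rule_format]])
    then have z: "\<And>i. column i A \<bullet> x = 0" using dpos by (metis UNIV_I mult_eq_0_iff order_less_irrefl power_eq_0_iff)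
    have "x \<in> {A *v lam | lam. \<forall>i. lam $ i \<ge> 0}" using std unfolding standing_assm_def by auto
    then obtain lam where "x = A *v lam" by auto
    then have "x \<bullet> x = 0" using dot_A[of x A lam] z by simp
    then show "x = 0" by simp
  qed
  then show ?thesis
    using invertible_left_inverse matrix_left_invertible_ker by blast
qed

definition QQ :: "real^'m^'n \<Rightarrow> real^'m \<Rightarrow> real^'m \<Rightarrow> real^'m \<Rightarrow> real^'n \<Rightarrow> real" where
  "QQ A u d l y = (\<Sum>i\<in>UNIV. d$i * (u$i - column i A \<bullet> y) * (column i A \<bullet> y - l$i))"

lemma ff_QQ: "ff A u d l = QQ A u d l (yy A u d l)"
proof -
  let ?y = "yy A u d l"
  have "ff A u d l = (\<Sum>i\<in>UNIV. vv u l $ i * (d$i * vv u l $ i)) - (\<Sum>i\<in>UNIV. tt A u d l $ i * (d$i * tt A u d l $ i))"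
    unfolding ff_def by (simp add: inner_vec_def diagm_apply)
  also have "\<dots> = (\<Sum>i\<in>UNIV. vv u l $ i * (d$i * vv u l $ i) - tt A u d l $ i * (d$i * tt A u d l $ i))"
    by (simp add: sum_subtractf)
  also have "\<dots> = QQ A u d l ?y"
    unfolding QQ_def
  proof (rule sum.cong)
    fix i
    have t: "tt A u d l $ i = column i A \<bullet> ?y - (u$i + l$i)/2"
      unfolding tt_def rr_def by (simp add: transpose_apply)
    have v: "vv u l $ i = (u$i - l$i)/2" unfolding vv_def by simp
    show "vv u l $ i * (d$i * vv u l $ i) - tt A u d l $ i * (d$i * tt A u d l $ i)
      = d$i * (u$i - column i A \<bullet> ?y) * (column i A \<bullet> ?y - l$i)"
      unfolding t v by (simp add: algebra_simps power2_eq_square divide_simps)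
  qed simp
  finally show ?thesis .
qed

definition NE :: "real^'m^'n \<Rightarrow> real^'m \<Rightarrow> real^'m \<Rightarrow> real^'m \<Rightarrow> real^'n \<Rightarrow> bool" where
  "NE A u d l y \<longleftrightarrow> BB A d *v y = A *v (diagm d *v rr u l)"

lemma NE_yy: "standing_assm A \<Longrightarrow> \<forall>i. d $ i > 0 \<Longrightarrow> NE A u d l (yy A u d l)"
  unfolding NE_def yy_def by (rule inv_apply2[OF BB_invertible])

lemma NE_unique: "standing_assm A \<Longrightarrow> \<forall>i. d $ i > 0 \<Longrightarrow> NE A u d l y \<Longrightarrow> yy A u d l = y"
  unfolding NE_def yy_def by (rule inv_apply[OF BB_invertible])

lemma NE_orth:
  assumes "NE A u d l y"
  shows "(\<Sum>i\<in>UNIV. d$i * (column i A \<bullet> w) * (column i A \<bullet> y - rr u l $ i)) = 0"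
proof -
  have "w \<bullet> (BB A d *v y) = w \<bullet> (A *v (diagm d *v rr u l))" using assms unfolding NE_def by simp
  then have "(\<Sum>i\<in>UNIV. (column i A \<bullet> w) * (d$i * (column i A \<bullet> y))) = (\<Sum>i\<in>UNIV. (column i A \<bullet> w) * (d$i * rr u l $ i))"
    by (simp add: BB_apply dot_A diagm_apply)
  then have "(\<Sum>i\<in>UNIV. (column i A \<bullet> w) * (d$i * (column i A \<bullet> y)) - (column i A \<bullet> w) * (d$i * rr u l $ i)) = 0"
    by (simp add: sum_subtractf)
  then show ?thesis by (simp add: algebra_simps)
qed

lemma QQ_shift:
  assumes "NE A u d l y"
  shows "QQ A u d l (y + w) = QQ A u d l y - (\<Sum>i\<in>UNIV. d$i * (column i A \<bullet> w)^2)"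
proof -
  have o: "(\<Sum>i\<in>UNIV. d$i * (column i A \<bullet> w) * (column i A \<bullet> y - rr u l $ i)) = 0"
    by (rule NE_orth[OF assms])
  have "QQ A u d l y - (\<Sum>i\<in>UNIV. d$i * (column i A \<bullet> w)^2) - 2 * (\<Sum>i\<in>UNIV. d$i * (column i A \<bullet> w) * (column i A \<bullet> y - rr u l $ i))
     = (\<Sum>i\<in>UNIV. d$i * (u$i - column i A \<bullet> y) * (column i A \<bullet> y - l$i) - d$i * (column i A \<bullet> w)^2 - 2 * (d$i * (column i A \<bullet> w) * (column i A \<bullet> y - rr u l $ i)))"
    unfolding QQ_def by (simp add: sum_subtractf sum_distrib_left)
  also have "\<dots> = QQ A u d l (y + w)"
    unfolding QQ_def
    by (rule sum.cong) (simp_all add: inner_add_right rr_def algebra_simps power2_eq_square)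
  finally show ?thesis using o by simp
qed



lemma z_props:
  fixes A :: "real^'m^'n" and j :: 'm
  assumes std: "standing_assm A" and dpos: "\<forall>i. d $ i > 0"
  defines "z \<equiv> matrix_inv (BB A d) *v column j A"
  shows "BB A d *v z = column j A"
    "(\<Sum>i\<in>UNIV. d$i * (column i A \<bullet> (mu *\<^sub>R z))^2) = mu^2 * (column j A \<bullet> z)"
    "column j A \<bullet> z > 0"
proof -
  show bz: "BB A d *v z = column j A" unfolding z_def by (rule inv_apply2[OF BB_invertible[OF std dpos]])
  have q: "(\<Sum>i\<in>UNIV. d$i * (column i A \<bullet> z)^2) = column j A \<bullet> z"
    using quad_BB[of z A d] bz by (simp add: inner_commute)
  show "(\<Sum>i\<in>UNIV. d$i * (column i A \<bullet> (mu *\<^sub>R z))^2) = mu^2 * (column j A \<bullet> z)"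
    by (simp add: q[symmetric] sum_distrib_left power_mult_distrib mult_ac)
  have ge: "column j A \<bullet> z \<ge> 0" unfolding q[symmetric]
    by (auto intro!: sum_nonneg mult_nonneg_nonneg simp: less_imp_le[OF dpos[rule_format]])
  show "column j A \<bullet> z > 0"
  proof (rule ccontr)
    assume "\<not> column j A \<bullet> z > 0"
    then have "(\<Sum>i\<in>UNIV. d$i * (column i A \<bullet> z)^2) = 0" using ge q by simp
    then have "\<forall>i\<in>UNIV. d$i * (column i A \<bullet> z)^2 = 0"
      by (subst sum_nonneg_eq_0_iff[symmetric]) (auto intro!: mult_nonneg_nonneg simp: less_imp_le[OF dpos[rule_format]])
    then have zz: "\<And>i. column i A \<bullet> z = 0" using dpos by (metis UNIV_I mult_eq_0_iff order_less_irrefl power_eq_0_iff)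
    have "(\<chi> i. d$i * (column i A \<bullet> z)) = 0" by (simp add: zz vec_eq_iff)
    then have "BB A d *v z = 0" unfolding BB_apply by simp
    then have "column j A = 0" using bz by simp
    moreover have "norm (column j A) = 1" using std unfolding standing_assm_def by auto
    ultimately show False by simp
  qed
qed

lemma vec_upd_mult:
  "(\<chi> i. (d + eps *\<^sub>R axis j 1)$i * c$i) = (\<chi> i. d$i * c$i) + (eps * c$j) *\<^sub>R axis j 1"
  by (simp add: vec_eq_iff axis_def algebra_simps)

lemma A_axis: "(A::real^'m^'n) *v (c *\<^sub>R axis j 1) = c *\<^sub>R column j A"
  by (simp add: matrix_vector_mult_scaleR matrix_vector_mult_basis)

lemma BB_upd:
  "BB A (d + eps *\<^sub>R axis j 1) *v x = BB A d *v x + (eps * (column j A \<bullet> x)) *\<^sub>R column j A"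
proof -
  have "BB A (d + eps *\<^sub>R axis j 1) *v x = A *v ((\<chi> i. d$i * (column i A \<bullet> x)) + (eps * (column j A \<bullet> x)) *\<^sub>R axis j 1)"
    unfolding BB_apply using vec_upd_mult[of d eps j "\<chi> i. column i A \<bullet> x"] by simp
  then show ?thesis by (simp add: matrix_vector_right_distrib A_axis BB_apply)
qed

lemma rhs_upd:
  "A *v (diagm (d + eps *\<^sub>R axis j 1) *v rr u (l + delta *\<^sub>R axis j 1))
   = A *v (diagm d *v rr u l) + (eps * rr u l $ j + delta/2 * (d$j + eps)) *\<^sub>R column j A"
proof -
  have "diagm (d + eps *\<^sub>R axis j 1) *v rr u (l + delta *\<^sub>R axis j 1)
     = diagm d *v rr u l + (eps * rr u l $ j + delta/2 * (d$j + eps)) *\<^sub>R axis j 1"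
    by (simp add: diagm_apply rr_def vec_eq_iff axis_def algebra_simps)
  then show ?thesis by (simp add: matrix_vector_right_distrib A_axis)
qed

lemma QQ_upd:
  "QQ A u (d + eps *\<^sub>R axis j 1) (l + delta *\<^sub>R axis j 1) y = QQ A u d l y
    + (d$j+eps)*(u$j - column j A \<bullet> y)*(column j A \<bullet> y - l$j - delta)
    - d$j*(u$j - column j A \<bullet> y)*(column j A \<bullet> y - l$j)"
proof -
  have "QQ A u (d + eps *\<^sub>R axis j 1) (l + delta *\<^sub>R axis j 1) y - QQ A u d l y
    = (\<Sum>i\<in>UNIV. if i = j then (d$j+eps)*(u$j - column j A \<bullet> y)*(column j A \<bullet> y - l$j - delta)
    - d$j*(u$j - column j A \<bullet> y)*(column j A \<bullet> y - l$j) else 0)"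
    unfolding QQ_def sum_subtractf[symmetric]
    by (rule sum.cong) (auto simp: axis_def)
  then show ?thesis by simp
qed



lemma step:
  fixes A :: "real^'m^'n" and j :: 'm and u l d :: "real^'m" and eps delta :: real
  assumes std: "standing_assm A" and dpos: "\<forall>i. d $ i > 0" and eps: "eps \<ge> 0"
  defines "z \<equiv> matrix_inv (BB A d) *v column j A"
  defines "h \<equiv> column j A \<bullet> z"
  defines "p \<equiv> column j A \<bullet> yy A u d l"
  defines "mu \<equiv> (eps * rr u l $ j + delta/2 * (d$j + eps) - eps * p) / (1 + eps * h)"
  shows "yy A u (d + eps *\<^sub>R axis j 1) (l + delta *\<^sub>R axis j 1) = yy A u d l + mu *\<^sub>R z"
    "ff A u (d + eps *\<^sub>R axis j 1) (l + delta *\<^sub>R axis j 1) = ff A u d l - mu^2 * h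
      + (d$j+eps)*(u$j - (p + mu*h))*((p + mu*h) - l$j - delta)
      - d$j*(u$j - (p + mu*h))*((p + mu*h) - l$j)"
proof -
  let ?y = "yy A u d l"
  let ?y' = "?y + mu *\<^sub>R z"
  let ?d' = "d + eps *\<^sub>R axis j 1"
  let ?l' = "l + delta *\<^sub>R axis j 1"
  have bz: "BB A d *v z = column j A" and hpos: "h > 0"
    using z_props[OF std dpos, where j=j] unfolding z_def h_def by auto
  have d'pos: "\<forall>i. ?d' $ i > 0" using dpos eps by (auto simp: axis_def intro: add_pos_nonneg)
  have ney: "NE A u d l ?y" by (rule NE_yy[OF std dpos])
  have ay': "column j A \<bullet> ?y' = p + mu * h"
    by (simp add: inner_add_right p_def h_def)
  have den: "1 + eps * h > 0" using eps hpos by (simp add: add_pos_nonneg)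
  have m: "mu * (1 + eps * h) = eps * rr u l $ j + delta/2 * (d$j + eps) - eps * p"
    using den unfolding mu_def by simp
  have "mu + eps * (p + mu * h) = mu * (1 + eps * h) + eps * p" by (simp add: algebra_simps)
  then have key: "mu + eps * (p + mu * h) = eps * rr u l $ j + delta/2 * (d$j + eps)"
    using m by simp
  have "BB A ?d' *v ?y' = BB A d *v ?y' + (eps * (p + mu * h)) *\<^sub>R column j A"
    by (simp add: BB_upd ay')
  also have "\<dots> = A *v (diagm d *v rr u l) + (mu + eps * (p + mu * h)) *\<^sub>R column j A"
    using ney unfolding NE_def
    by (simp add: matrix_vector_right_distrib matrix_vector_mult_scaleR bz scaleR_add_left)
  also have "\<dots> = A *v (diagm ?d' *v rr u ?l')"
    by (simp add: rhs_upd key)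
  finally have ne': "NE A u ?d' ?l' ?y'" unfolding NE_def .
  then show yy': "yy A u ?d' ?l' = ?y'" by (rule NE_unique[OF std d'pos])
  have "ff A u ?d' ?l' = QQ A u ?d' ?l' ?y'" by (simp add: ff_QQ yy')
  also have "\<dots> = QQ A u d l ?y' + (d$j+eps)*(u$j - (p + mu*h))*((p + mu*h) - l$j - delta)
      - d$j*(u$j - (p + mu*h))*((p + mu*h) - l$j)"
    by (simp add: QQ_upd ay')
  also have "QQ A u d l ?y' = ff A u d l - mu^2 * h"
    using QQ_shift[OF ney, of "mu *\<^sub>R z"] z_props(2)[OF std dpos, where mu=mu and j=j]
    by (simp add: ff_QQ z_def h_def)
  finally show "ff A u ?d' ?l' = ff A u d l - mu^2 * h
      + (d$j+eps)*(u$j - (p + mu*h))*((p + mu*h) - l$j - delta)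
      - d$j*(u$j - (p + mu*h))*((p + mu*h) - l$j)" .
qed

lemma scale:
  fixes A :: "real^'m^'n" and j :: 'm
  assumes std: "standing_assm A" and dpos: "\<forall>i. d $ i > 0" and c: "c > 0"
  shows "yy A u (c *\<^sub>R d) l = yy A u d l"
    "ff A u (c *\<^sub>R d) l = c * ff A u d l"
    "column j A \<bullet> (matrix_inv (BB A (c *\<^sub>R d)) *v column j A) = (column j A \<bullet> (matrix_inv (BB A d) *v column j A)) / c"
proof -
  have cd: "\<forall>i. (c *\<^sub>R d) $ i > 0" using dpos c by simp
  have BBs: "\<And>x. BB A (c *\<^sub>R d) *v x = c *\<^sub>R (BB A d *v x)"
  proof -
    fix x
    have "(\<chi> i. (c *\<^sub>R d)$i * (column i A \<bullet> x)) = c *\<^sub>R (\<chi> i. d$i * (column i A \<bullet> x))"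
      by (simp add: vec_eq_iff)
    then show "BB A (c *\<^sub>R d) *v x = c *\<^sub>R (BB A d *v x)"
      by (simp add: BB_apply matrix_vector_mult_scaleR)
  qed
  have ne: "NE A u d l (yy A u d l)" by (rule NE_yy[OF std dpos])
  have dg: "diagm (c *\<^sub>R d) *v rr u l = c *\<^sub>R (diagm d *v rr u l)"
    by (simp add: diagm_apply vec_eq_iff)
  have "NE A u (c *\<^sub>R d) l (yy A u d l)"
    using ne unfolding NE_def
    by (simp add: BBs dg matrix_vector_mult_scaleR)
  then show y: "yy A u (c *\<^sub>R d) l = yy A u d l" by (rule NE_unique[OF std cd])
  show "ff A u (c *\<^sub>R d) l = c * ff A u d l"
    by (simp add: ff_QQ y QQ_def sum_distrib_left mult_ac)
  let ?z = "matrix_inv (BB A d) *v column j A"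
  have "BB A (c *\<^sub>R d) *v ((1/c) *\<^sub>R ?z) = column j A"
    using c by (simp add: BBs matrix_vector_mult_scaleR inv_apply2[OF BB_invertible[OF std dpos]])
  then have "matrix_inv (BB A (c *\<^sub>R d)) *v column j A = (1/c) *\<^sub>R ?z"
    by (rule inv_apply[OF BB_invertible[OF std cd]])
  then show "column j A \<bullet> (matrix_inv (BB A (c *\<^sub>R d)) *v column j A) = (column j A \<bullet> ?z) / c"
    by simp
qed



lemma card_ge2:
  fixes A :: "real^'m^'n"
  assumes std: "standing_assm A"
  shows "CARD('m) \<ge> 2"
proof (rule ccontr)
  assume "\<not> CARD('m) \<ge> 2"
  then have c1: "CARD('m) \<le> 1" by simp
  obtain j :: 'm where True by simp
  have all: "\<And>i::'m. i = j"
    using c1 card_le_Suc0_iff_eq[of "UNIV::'m set"] by auto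
  have "- column j A \<in> {A *v lam | lam. \<forall>i. lam $ i \<ge> 0}" using std unfolding standing_assm_def by auto
  then obtain lam where lam: "- column j A = A *v lam" "\<forall>i. lam $ i \<ge> 0" by auto
  have "lam = (lam $ j) *\<^sub>R axis j 1" by (simp add: vec_eq_iff axis_def) (metis all)
  then have "A *v lam = (lam $ j) *\<^sub>R column j A" by (metis A_axis)
  then have "- column j A = (lam $ j) *\<^sub>R column j A" using lam(1) by simp
  then have "column j A + (lam $ j) *\<^sub>R column j A = 0" by (metis right_minus)
  then have "(1 + lam $ j) *\<^sub>R column j A = 0" by (simp add: scaleR_add_left)
  moreover have "1 + lam $ j > 0" using lam(2) by (simp add: add_pos_nonneg)
  ultimately have "column j A = 0" by simp
  moreover have "norm (column j A) = 1" using std unfolding standing_assm_def by auto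
  ultimately show False by simp
qed

lemma gen2: "(2 * X / Q) / 2 = (X::real) / Q" by simp

lemma gen3: "(a::real) \<noteq> 0 \<Longrightarrow> b \<noteq> 0 \<Longrightarrow> c \<noteq> 0 \<Longrightarrow> (- 1 / (a * c)) / (b / a) = - 1 / (b * c)"
  by (simp add: field_simps)

lemma gen4: "(b::real) \<noteq> 0 \<Longrightarrow> c \<noteq> 0 \<Longrightarrow> (- 1 / (b * c)) * c^2 = - (c / b)"
  by (simp add: field_simps power2_eq_square)

lemma gen5: "(b::real) \<noteq> 0 \<Longrightarrow> c \<noteq> 0 \<Longrightarrow> (- 1 / (b * c))^2 * c^2 = 1 / b^2"
  by (simp add: field_simps power2_eq_square)

lemma gen6: "(D+e)*(U - (U + - t))*((U + - t) - L - dl) - D*(U - (U + - t))*((U + - t) - L)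
   = (t::real) * (e * (U - t - L) - dl * (D + e))"
  by (simp add: algebra_simps)

lemma gen7: "(Q::real) \<noteq> 0 \<Longrightarrow> (2/Q)*(U - t - L) - 2*(U-L-g)/Q = 2*(g - t)/Q"
  by (simp add: field_simps)
lemma gen8: "(a::real) \<noteq> 0 \<Longrightarrow> b \<noteq> 0 \<Longrightarrow> g \<noteq> 0 \<Longrightarrow> 2*(g - g/a)/(b*g^2) = 2*(a - 1)/(b*a*g)"
  by (simp add: field_simps power2_eq_square)
lemma gen9: "(a::real) \<noteq> 0 \<Longrightarrow> b \<noteq> 0 \<Longrightarrow> g \<noteq> 0 \<Longrightarrow> (g/a) * (2*(a - 1)/(b*a*g)) = 2*(a-1)/(b*a^2)"
  by (simp add: field_simps power2_eq_square)
lemma gen10a: "(b::real) > 0 \<Longrightarrow> c > 0 \<Longrightarrow> c = b + 2 \<Longrightarrow> 1 - 1/c^2 + 2*(b+1)/(b*c^2) = (b+1)^2/(b*c)"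
proof -
  assume b: "b > 0" and c: "c > 0" and cb: "c = b + 2"
  have "(1 - 1/c^2 + 2*(b+1)/(b*c^2)) * (b * c^2) = b*c^2 - b + 2*(b+1)"
    using b c by (simp add: field_simps power2_eq_square)
  also have "\<dots> = (b+1)^2 * c"
    unfolding cb by (simp add: algebra_simps power2_eq_square)
  also have "\<dots> = ((b+1)^2/(b*c)) * (b*c^2)"
    using b c by (simp add: power2_eq_square)
  finally have E: "(1 - 1/c^2 + 2*(b+1)/(b*c^2)) * (b * c^2) = ((b+1)^2/(b*c)) * (b*c^2)" .
  have K: "b*c^2 \<noteq> 0" using b c by simp
  show ?thesis using E unfolding mult_right_cancel[OF K] .
qed
lemma gen10: "(b::real) > 0 \<Longrightarrow> 1 - 1/(b+2)^2 + 2*(b+1)/(b*(b+2)^2) = (b+1)^2/((b+1)^2 - 1)"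
proof -
  assume b: "b > 0"
  have e: "(b+1)^2 - 1 = b*(b+2)" by (simp add: algebra_simps power2_eq_square)
  show ?thesis unfolding e by (rule gen10a) (use b in auto)
qed

lemma alg:
  fixes M g D U L :: real
  assumes M: "M \<ge> 2" and g: "g > 0" and D: "D > 0"
  defines "eps \<equiv> 2 / (M - 1) * (1 / g^2)"
  defines "delta \<equiv> 2 * (2 * ((U - L)/2) - g) / ((M - 1) * D * g^2 + 2)"
  defines "mu \<equiv> (eps * ((U + L)/2) + delta/2 * (D + eps) - eps * U) / (1 + eps * g^2)"
  shows "1 - mu^2 * g^2 + (D+eps)*(U - (U + mu*g^2))*((U + mu*g^2) - L - delta)
      - D*(U - (U + mu*g^2))*((U + mu*g^2) - L) = M^2 / (M^2 - 1)"
proof -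
  have k: "M - 1 > 0" using M by simp
  have M1: "1 + M > 0" "M + 1 > 0" using M by simp_all
  have e1: "eps * g^2 = 2 / (M - 1)" unfolding eps_def using g by simp
  have De: "D + eps = ((M - 1) * D * g^2 + 2) / ((M - 1) * g^2)"
    unfolding eps_def using k g by (simp add: field_simps)
  have pos: "(M - 1) * D * g^2 + 2 > 0" using k D g by (simp add: add_pos_pos)
  define P where "P = (M - 1) * D * g^2 + 2"
  have Pp: "P \<noteq> 0" using pos unfolding P_def by simp
  have dDe: "delta * (D + eps) = 2 * (U - L - g) / ((M - 1) * g^2)"
  proof -
    have dl: "delta = 2 * (U - L - g) / P" unfolding delta_def P_def by simp
    have "delta * (D + eps) = (2 * (U - L - g) / P) * (P / ((M - 1) * g^2))"
      unfolding dl De P_def by simp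
    also have "\<dots> = 2 * (U - L - g) / ((M - 1) * g^2)" using Pp by simp
    finally show ?thesis .
  qed
  have num: "eps * ((U + L)/2) + delta/2 * (D + eps) - eps * U = - 1 / ((M - 1) * g)"
  proof -
    have Qn: "(M - 1) * g^2 \<noteq> 0" using k g by simp
    have eQ: "eps = 2 / ((M - 1) * g^2)" unfolding eps_def by simp
    have t1: "eps * ((U + L)/2) - eps * U = (L - U) / ((M - 1) * g^2)"
    proof -
      have "eps * ((U + L)/2) - eps * U = (eps/2) * (L - U)" by (simp add: algebra_simps)
      also have "eps/2 = 1 / ((M - 1) * g^2)" unfolding eQ by simp
      finally show ?thesis by simp
    qed
    have t2: "delta/2 * (D + eps) = (U - L - g) / ((M - 1) * g^2)"
    proof -
      have "delta/2 * (D + eps) = (delta * (D + eps)) / 2" by simp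
      also have "\<dots> = (2 * (U - L - g) / ((M - 1) * g^2)) / 2" using dDe by simp
      also have "\<dots> = (U - L - g) / ((M - 1) * g^2)" by (rule gen2)
      finally show ?thesis .
    qed
    have "eps * ((U + L)/2) + delta/2 * (D + eps) - eps * U = (L - U) / ((M - 1) * g^2) + (U - L - g) / ((M - 1) * g^2)"
      using t1 t2 by linarith
    also have "\<dots> = (- g) / ((M - 1) * g^2)" by (simp add: add_divide_distrib[symmetric])
    also have "\<dots> = - 1 / ((M - 1) * g)" using k g by (simp add: field_simps power2_eq_square)
    finally show ?thesis .
  qed
  have mu: "mu = - 1 / ((M + 1) * g)"
  proof -
    have "1 + 2 / (M - 1) = (M + 1) / (M - 1)" using k by (simp add: field_simps)
    then have "mu = (- 1 / ((M - 1) * g)) / ((M + 1) / (M - 1))"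
      unfolding mu_def num e1 by simp
    also have "\<dots> = - 1 / ((M + 1) * g)" by (rule gen3) (use k g in auto)
    finally show ?thesis .
  qed
  have mg: "mu * g^2 = - (g / (M + 1))" unfolding mu by (rule gen4) (use g M1 in auto)
  have mg2: "mu^2 * g^2 = 1 / (M + 1)^2" unfolding mu by (rule gen5) (use g M1 in auto)
  have Qn: "(M - 1) * g^2 \<noteq> 0" using k g by simp
  have eQ: "eps = 2 / ((M - 1) * g^2)" unfolding eps_def by simp
  have e3: "M + 1 - 1 = M" by simp
  have "(D+eps)*(U - (U + mu*g^2))*((U + mu*g^2) - L - delta) - D*(U - (U + mu*g^2))*((U + mu*g^2) - L)
      = (g / (M + 1)) * (eps * (U - g/(M+1) - L) - delta * (D + eps))"
    unfolding mg by (rule gen6)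
  also have "eps * (U - g/(M+1) - L) - delta * (D + eps) = 2 * (g - g/(M+1)) / ((M - 1) * g^2)"
    unfolding dDe unfolding eQ by (rule gen7[OF Qn])
  also have "\<dots> = 2 * (M + 1 - 1) / ((M - 1) * (M + 1) * g)"
    by (rule gen8) (use k g M1 in auto)
  also have "(g / (M + 1)) * (2 * (M + 1 - 1) / ((M - 1) * (M + 1) * g)) = 2 * (M + 1 - 1) / ((M - 1) * (M + 1)^2)"
    by (rule gen9) (use k g M1 in auto)
  finally have mid: "(D+eps)*(U - (U + mu*g^2))*((U + mu*g^2) - L - delta) - D*(U - (U + mu*g^2))*((U + mu*g^2) - L)
      = 2 * M / ((M - 1) * (M + 1)^2)" unfolding e3 .
  have "1 - mu^2 * g^2 + (D+eps)*(U - (U + mu*g^2))*((U + mu*g^2) - L - delta)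
      - D*(U - (U + mu*g^2))*((U + mu*g^2) - L) = 1 - 1 / (M + 1)^2 + 2 * M / ((M - 1) * (M + 1)^2)"
    using mg2 mid by linarith
  also have "\<dots> = M^2 / (M^2 - 1)"
  proof -
    have e1: "M - 1 + 2 = M + 1" "M - 1 + 1 = M" by simp_all
    show ?thesis using gen10[of "M - 1", unfolded e1] k by simp
  qed
  finally show ?thesis .
qed

lemma avg_le:
  fixes c X Y Mx :: real
  assumes "c \<ge> 0" "X \<le> Mx" "Y \<le> Mx"
  shows "X + 2 * (Y - X) / (c + 2) \<le> Mx"
proof -
  have a1: "2 * (Mx - X) \<le> (c + 2) * (Mx - X)" by (rule mult_right_mono) (use assms in auto)
  have a2: "2 * (Y - X) \<le> 2 * (Mx - X)" using assms by simp
  have "2 * (Y - X) \<le> (c + 2) * (Mx - X)" using order_trans[OF a2 a1] .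
  then have "2 * (Y - X) / (c + 2) \<le> Mx - X" using assms by (simp add: divide_le_eq mult.commute)
  then show ?thesis by simp
qed



theorem lemma6:
  fixes A :: "real^'m^'n" and u d l l1 l2 d1 d2 d3 :: "real^'m"
    and Lam :: "real^'m^'m" and j :: 'm and L :: real
  assumes std: "standing_assm A"
    and dpos: "\<forall>i. d $ i > 0"
    and cert: "certified_lb A u l Lam"
    and f1: "ff A u d l = 1"
    and hj: "0 < column j A \<bullet> yy A u d l - u $ j"
            "column j A \<bullet> yy A u d l - u $ j \<le> gam A u d l j"
    and L_def: "L = column j A \<bullet> yy A u d l - gam A u d l j"
    and hL: "- (column j Lam \<bullet> u) \<ge> L"
    and l1_def: "l1 = l - (2 * (tt A u d l $ j - vv u l $ j) / (d $ j * (gam A u d l j)\<^sup>2)) *\<^sub>R axis j 1"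
    and f_l1: "ff A u d l1 > 0"
    and d1_def: "d1 = (1 / ff A u d l1) *\<^sub>R d"
    and l2_def: "l2 = l1 + (2 * (2 * vv u l1 $ j - gam A u d1 l1 j) /
                   ((real CARD('m) - 1) * d1 $ j * (gam A u d1 l1 j)\<^sup>2 + 2)) *\<^sub>R axis j 1"
    and d2_def: "d2 = d1 + (2 / (real CARD('m) - 1) * (1 / (gam A u d1 l1 j)\<^sup>2)) *\<^sub>R axis j 1"
    and d3_def: "d3 = (1 / ff A u d2 l2) *\<^sub>R d2"
  shows "(l2 $ j \<le> max (l $ j) L \<and> certified_lb A u l2 Lam)
       \<and> gam A u d1 l1 j > 0
       \<and> (ff A u d2 l2 = (real CARD('m))\<^sup>2 / ((real CARD('m))\<^sup>2 - 1)
          \<and> d3 = (((real CARD('m))\<^sup>2 - 1) / (real CARD('m))\<^sup>2) *\<^sub>R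
                 (d1 + (2 / (real CARD('m) - 1) * (1 / (gam A u d1 l1 j)\<^sup>2)) *\<^sub>R axis j 1))"
proof -
  have M2: "real CARD('m) \<ge> 2" using card_ge2[OF std] by simp
  define a where "a = column j A"
  define y where "y = yy A u d l"
  define z where "z = matrix_inv (BB A d) *v a"
  define h where "h = a \<bullet> z"
  define p where "p = a \<bullet> y"
  define s where "s = p - u$j"
  have hpos: "h > 0" using z_props(3)[OF std dpos, where j=j] unfolding h_def z_def a_def .
  have djpos: "d$j > 0" using dpos by simp
  have gam0: "gam A u d l j = sqrt h" unfolding gam_def f1 h_def z_def a_def by simp
  have sq: "(sqrt h)^2 = h" using hpos by simp
  have ttj: "tt A u d l $ j = p - rr u l $ j" unfolding tt_def p_def y_def a_def by (simp add: transpose_apply)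
  have vvj: "vv u l $ j = (u$j - l$j)/2" by (simp add: vv_def)
  have rrj: "rr u l $ j = (u$j + l$j)/2" by (simp add: rr_def)
  have tv: "tt A u d l $ j - vv u l $ j = s" unfolding ttj vvj rrj s_def by (simp add: field_simps)
  have spos: "s > 0" using hj(1) unfolding s_def p_def a_def y_def .
  have sle: "s \<le> sqrt h" using hj(2) unfolding s_def p_def a_def y_def gam0 .
  have Lv: "L = u$j + s - sqrt h" using L_def unfolding gam0 s_def p_def a_def y_def by simp
  define del1 where "del1 = - (2 * s / (d$j * h))"
  have l1e: "l1 = l + del1 *\<^sub>R axis j 1"
    unfolding l1_def tv gam0 sq del1_def by (simp add: algebra_simps)
  note st1 = step[where eps=0 and delta=del1 and j=j and u=u and l=l, OF std dpos order_refl]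
  define mu1 where "mu1 = del1/2 * d$j"
  have mu1v: "mu1 = - s / h" unfolding mu1_def del1_def using djpos hpos by (simp add: field_simps)
  have y1: "yy A u d l1 = y + mu1 *\<^sub>R z"
    using st1(1) unfolding l1e y_def z_def a_def mu1_def by simp
  have f1': "ff A u d l1 = 1 - mu1^2 * h + d$j*(u$j - (p + mu1*h))*((p+mu1*h) - l$j - del1) - d$j*(u$j - (p+mu1*h))*((p+mu1*h) - l$j)"
    using st1(2) unfolding l1e f1 y_def z_def a_def mu1_def h_def p_def by simp
  have q1: "p + mu1*h = u$j" unfolding mu1v s_def using hpos by simp
  define phi where "phi = ff A u d l1"
  have phiv: "phi = 1 - s^2/h" unfolding phi_def f1' q1 unfolding mu1v using hpos by (simp add: power2_eq_square)
  have phipos: "phi > 0" using f_l1 unfolding phi_def .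
  have ay1: "a \<bullet> yy A u d l1 = u$j" unfolding y1 using q1 by (simp add: inner_add_right p_def h_def)
  have d1e: "d1 = (1/phi) *\<^sub>R d" unfolding d1_def phi_def ..
  have iphi: "1/phi > 0" using phipos by simp
  have d1pos: "\<forall>i. d1 $ i > 0" unfolding d1e using dpos phipos by simp
  have yd1: "yy A u d1 l1 = yy A u d l1" unfolding d1e by (rule scale(1)[OF std dpos iphi])
  have fd1: "ff A u d1 l1 = 1" unfolding d1e scale(2)[OF std dpos iphi] phi_def[symmetric] using phipos by simp
  have hd1: "column j A \<bullet> (matrix_inv (BB A d1) *v column j A) = h * phi"
    unfolding d1e scale(3)[OF std dpos iphi, where j=j] using phipos by (simp add: h_def z_def a_def)
  have gv: "gam A u d1 l1 j = sqrt (h * phi)" unfolding gam_def fd1 hd1 by simp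
  have hphi: "h * phi > 0" using hpos phipos by simp
  have gpos: "gam A u d1 l1 j > 0" unfolding gv using hphi by simp
  have g2: "(gam A u d1 l1 j)^2 = h * phi" unfolding gv using hphi by simp
  define L1 where "L1 = l1 $ j"
  have L1v: "L1 = l$j + del1" unfolding L1_def l1e by simp
  have del1le: "del1 \<le> 0" unfolding del1_def using spos djpos hpos by simp
  have L1le: "L1 \<le> max (l $ j) L" using L1v del1le by simp
  have hphi2: "h * phi = h - s^2" unfolding phiv using hpos by (simp add: field_simps)
  have sq_le: "sqrt h - s \<le> gam A u d1 l1 j"
  proof -
    have "(sqrt h - s)^2 = h - 2 * s * sqrt h + s^2" using sq by (simp add: power2_diff)
    also have "\<dots> \<le> h - s^2"
    proof -
      have "s * s \<le> s * sqrt h" using sle spos by (simp add: mult_left_mono)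
      then show ?thesis by (simp add: power2_eq_square)
    qed
    finally have "(sqrt h - s)^2 \<le> h * phi" using hphi2 by simp
    then show ?thesis unfolding gv by (rule real_le_rsqrt)
  qed
  have Yle: "u$j - gam A u d1 l1 j \<le> max (l $ j) L" using sq_le Lv by simp
  define c where "c = (real CARD('m) - 1) * d1 $ j * (gam A u d1 l1 j)\<^sup>2"
  have c0: "c \<ge> 0" unfolding c_def using M2 d1pos[rule_format, of j]
    by (intro mult_nonneg_nonneg) auto
  have vv1: "2 * vv u l1 $ j = u$j - L1" unfolding L1_def vv_def by simp
  have l2j: "l2 $ j = L1 + 2 * ((u$j - gam A u d1 l1 j) - L1) / (c + 2)"
    unfolding l2_def c_def[symmetric] vv1 by (simp add: L1_def)
  have aa: "l2 $ j \<le> max (l $ j) L" unfolding l2j by (rule avg_le[OF c0 L1le Yle])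
  have l2o: "\<And>i. i \<noteq> j \<Longrightarrow> l2 $ i = l $ i" unfolding l2_def l1e by (simp add: axis_def)
  have certl2: "certified_lb A u l2 Lam"
  proof -
    have c1: "A ** Lam = - A" "\<forall>i k. Lam $ i $ k \<ge> 0" "\<forall>i. - ((transpose Lam *v u) $ i) \<ge> l $ i"
      using cert unfolding certified_lb_def by auto
    have "\<forall>i. - ((transpose Lam *v u) $ i) \<ge> l2 $ i"
    proof
      fix i
      show "- ((transpose Lam *v u) $ i) \<ge> l2 $ i"
      proof (cases "i = j")
        case True
        have "- ((transpose Lam *v u) $ j) \<ge> max (l $ j) L"
          using c1(3) hL by (simp add: transpose_apply)
        then show ?thesis using True aa by (metis order.trans)
      next
        case False
        then show ?thesis using c1(3) l2o by simp
      qed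
    qed
    then show ?thesis unfolding certified_lb_def using c1 by simp
  qed
  define eps2 where "eps2 = 2 / (real CARD('m) - 1) * (1 / (gam A u d1 l1 j)\<^sup>2)"
  define delta2 where "delta2 = 2 * (2 * vv u l1 $ j - gam A u d1 l1 j) /
                   ((real CARD('m) - 1) * d1 $ j * (gam A u d1 l1 j)\<^sup>2 + 2)"
  have eps2p: "eps2 \<ge> 0" unfolding eps2_def using M2 by simp
  note st2 = step[where eps=eps2 and delta=delta2 and j=j and u=u and l=l1 and d=d1, OF std d1pos eps2p]
  have hd1': "column j A \<bullet> (matrix_inv (BB A d1) *v column j A) = (gam A u d1 l1 j)^2"
    unfolding hd1 g2 ..
  have pd1: "column j A \<bullet> yy A u d1 l1 = u$j" unfolding yd1 using ay1 unfolding a_def .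
  have rr1: "rr u l1 $ j = (u$j + l1$j)/2" by (simp add: rr_def)
  have vv1': "vv u l1 $ j = (u$j - l1$j)/2" by (simp add: vv_def)
  have d1j: "d1 $ j > 0" using d1pos by simp
  have ffd2: "ff A u d2 l2 = (real CARD('m))\<^sup>2 / ((real CARD('m))\<^sup>2 - 1)"
  proof -
    have "ff A u d2 l2 = ff A u (d1 + eps2 *\<^sub>R axis j 1) (l1 + delta2 *\<^sub>R axis j 1)"
      unfolding d2_def l2_def eps2_def delta2_def ..
    also have "\<dots> = (real CARD('m))\<^sup>2 / ((real CARD('m))\<^sup>2 - 1)"
      using st2(2) alg[OF M2 gpos d1j, where U="u$j" and L="l1$j"]
      unfolding hd1' pd1 fd1 rr1 delta2_def vv1' eps2_def by simp
    finally show ?thesis .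
  qed
  have d3v: "d3 = (((real CARD('m))\<^sup>2 - 1) / (real CARD('m))\<^sup>2) *\<^sub>R
                 (d1 + (2 / (real CARD('m) - 1) * (1 / (gam A u d1 l1 j)\<^sup>2)) *\<^sub>R axis j 1)"
    unfolding d3_def ffd2 d2_def[symmetric] by simp
  show ?thesis using aa certl2 gpos ffd2 d3v by simp
qed


end
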